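(* Let $k\ge2$ and let $u_1,\dots,u_k$ be homogeneous elements of $\mathfrak{B}(V)$ with $u_iu_j=r_{i,j}u_ju_i$ for scalars $r_{i,j}\in F^*$, where $r_{i,j}=1$ whenever $u_i=u_j$. For $a\in\mathfrak{B}(V)$ let $l_i(a):=[u_i,a]^-$. (i) For all $m_2,\dots,m_k\in\mathbb{N}$, $$l_k^{m_k}l_{k-1}^{m_{k-1}}\cdots l_2^{m_2}(u_1)=\lambda_2^{m_2}\lambda_3^{m_3}\cdots\lambda_k^{m_k}\;u_1u_2^{m_2}\cdots u_k^{m_k},\qquad \lambda_i:=r_{i,1}r_{i,2}^{m_2}\cdots r_{i,i-1}^{m_{i-1}}-1 .$$ (ii) If $u_1,\dots,u_k\in\mathfrak{L}^-(V)$ and $r_{i,1}r_{i,2}\cdots r_{i,i-1}\neq1$ for $2\le i\le k$, then $u_1u_2\cdots u_k\in\mathfrak{L}^-(V)$. (iii) Let $u_1,u_2\in\mathfrak{L}^-(V)$ be homogeneous with $u_1u_2=r_{1,2}u_2u_1$, $u_2u_1=r_{2,1}u_1u_2$, and let $\alpha_1,\alpha_2\ge1$ with $u_1^{\alpha_1}u_2^{\alpha_2}\neq0$. If $\operatorname{ord}(r_{2,1})\nmid\alpha_1$ or $\operatorname{ord}(r_{1,2})\nmid\alpha_2$, then $u_1^{\alpha_1}u_2^{\alpha_2}\in\mathfrak{L}^-(V)$. (iv) If moreover in (iii) $u_1,u_2\in\{x_1,\dots,x_n\}$, then $u_1^{\alpha_1}u_2^{\alpha_2}\in\mathfrak{L}^-(V)$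 if and only if $\operatorname{ord}(r_{2,1})\nmid\alpha_1$ or $\operatorname{ord}(r_{1,2})\nmid\alpha_2$.
   Context: $V$ is a braided vector space of diagonal type over an algebraically closed field $F$ of characteristic $0$ with basis $x_1,\dots,x_n$ and Nichols algebra $\mathfrak{B}(V)$. $[a,b]^-:=ab-ba$, and $\mathfrak{L}^-(V)$ is the Lie subalgebra of $\mathfrak{B}(V)$ generated by $V$ under $[\,,\,]^-$. $\operatorname{ord}(a)$ is the multiplicative order of $a\in F^*$ (with $\operatorname{ord}(a)=\infty$ if $a$ is not a root of unity), and by convention $\infty$ does not divide any integer. *)

theory Defs
  imports Main "HOL-Computational_Algebra.Polynomial"
begin

text \<open>Realisation of the Nichols algebra B(V) of a diagonal braiding
  c(x_i \<otimes> x_j) = q i j x_j \<otimes> x_i (letters i < n) as the subalgebra of the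
  quantum shuffle algebra generated by V (Rosso/Schauenburg).  Elements of the
  shuffle algebra are functions from words (nat list) to scalars.\<close>

text \<open>Quantum shuffle product of two words, as a coefficient function.
  (x u) sh (y v) = x (u sh (y v)) + (prod of q a y over a in x u) y ((x u) sh v).\<close>
fun wsh :: "(nat \<Rightarrow> nat \<Rightarrow> 'a::comm_ring_1) \<Rightarrow> nat list \<Rightarrow> nat list \<Rightarrow> nat list \<Rightarrow> 'a" where
  "wsh q [] v w = (if w = v then 1 else 0)"
| "wsh q (x#u) [] w = (if w = x#u then 1 else 0)"
| "wsh q (x#u) (y#v) [] = 0"
| "wsh q (x#u) (y#v) (z#w) =
     (if z = x then wsh q u (y#v) w else 0)
   + (if z = y then prod_list (map (\<lambda>a. q a y) (x#u)) * wsh q (x#u) v w else 0)"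

definition shprod :: "(nat \<Rightarrow> nat \<Rightarrow> 'a::comm_ring_1) \<Rightarrow> (nat list \<Rightarrow> 'a) \<Rightarrow> (nat list \<Rightarrow> 'a) \<Rightarrow> nat list \<Rightarrow> 'a" where
  "shprod q f g = (\<lambda>w. \<Sum>u\<in>set (subseqs w). \<Sum>v\<in>set (subseqs w). f u * g v * wsh q u v w)"

definition monom :: "nat list \<Rightarrow> nat list \<Rightarrow> 'a::comm_ring_1" where
  "monom w = (\<lambda>w'. if w' = w then 1 else 0)"

definition gen :: "nat \<Rightarrow> nat list \<Rightarrow> 'a::comm_ring_1" where
  "gen i = monom [i]"

definition smul :: "'a::comm_ring_1 \<Rightarrow> (nat list \<Rightarrow> 'a) \<Rightarrow> nat list \<Rightarrow> 'a" where
  "smul c f = (\<lambda>w. c * f w)"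

primrec shpow :: "(nat \<Rightarrow> nat \<Rightarrow> 'a::comm_ring_1) \<Rightarrow> (nat list \<Rightarrow> 'a) \<Rightarrow> nat \<Rightarrow> nat list \<Rightarrow> 'a" where
  "shpow q f 0 = monom []"
| "shpow q f (Suc m) = shprod q f (shpow q f m)"

definition br :: "(nat \<Rightarrow> nat \<Rightarrow> 'a::comm_ring_1) \<Rightarrow> (nat list \<Rightarrow> 'a) \<Rightarrow> (nat list \<Rightarrow> 'a) \<Rightarrow> nat list \<Rightarrow> 'a" where
  "br q f g = (\<lambda>w. shprod q f g w - shprod q g f w)"

inductive_set nichols :: "(nat \<Rightarrow> nat \<Rightarrow> 'a::comm_ring_1) \<Rightarrow> nat \<Rightarrow> (nat list \<Rightarrow> 'a) set"
  for q n where
  one: "monom [] \<in> nichols q n"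
| gen: "i < n \<Longrightarrow> gen i \<in> nichols q n"
| add: "f \<in> nichols q n \<Longrightarrow> g \<in> nichols q n \<Longrightarrow> (\<lambda>w. f w + g w) \<in> nichols q n"
| smul: "f \<in> nichols q n \<Longrightarrow> smul c f \<in> nichols q n"
| mult: "f \<in> nichols q n \<Longrightarrow> g \<in> nichols q n \<Longrightarrow> shprod q f g \<in> nichols q n"

inductive_set lie_minus :: "(nat \<Rightarrow> nat \<Rightarrow> 'a::comm_ring_1) \<Rightarrow> nat \<Rightarrow> (nat list \<Rightarrow> 'a) set"
  for q n where
  gen: "i < n \<Longrightarrow> gen i \<in> lie_minus q n"
| add: "f \<in> lie_minus q n \<Longrightarrow> g \<in> lie_minus q n \<Longrightarrow> (\<lambda>w. f w + g w) \<in> lie_minus q n"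
| smul: "f \<in> lie_minus q n \<Longrightarrow> smul c f \<in> lie_minus q n"
| bracket: "f \<in> lie_minus q n \<Longrightarrow> g \<in> lie_minus q n \<Longrightarrow> br q f g \<in> lie_minus q n"

text \<open>Homogeneous with respect to the N^n-grading (degree of a word = multiset of its letters).\<close>
definition homogeneous :: "(nat list \<Rightarrow> 'a::zero) \<Rightarrow> bool" where
  "homogeneous f = (\<exists>d. \<forall>w. f w \<noteq> 0 \<longrightarrow> mset w = d)"

text \<open>Multiplicative order: None encodes infinity (not a root of unity).\<close>
definition mult_order :: "'a::comm_ring_1 \<Rightarrow> nat option" where
  "mult_order a = (if \<exists>k>0. a ^ k = 1 then Some (LEAST k. k > 0 \<and> a ^ k = 1) else None)"

text \<open>ord(a) divides m; infinity divides no integer.\<close>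
definition ord_dvd :: "'a::comm_ring_1 \<Rightarrow> nat \<Rightarrow> bool" where
  "ord_dvd a m = (case mult_order a of None \<Rightarrow> False | Some d \<Rightarrow> d dvd m)"

definition alg_closed :: "'a::field itself \<Rightarrow> bool" where
  "alg_closed _ = (\<forall>p::'a poly. degree p > 0 \<longrightarrow> (\<exists>x. poly p x = 0))"

end

theory Submission
  imports Defs
begin


definition dz :: "nat \<Rightarrow> (nat list \<Rightarrow> 'a) \<Rightarrow> nat list \<Rightarrow> 'a" where
  "dz z f = (\<lambda>w. f (z#w))"
definition chi :: "(nat \<Rightarrow> nat \<Rightarrow> 'a::comm_ring_1) \<Rightarrow> nat list \<Rightarrow> nat \<Rightarrow> 'a" where
  "chi q w z = prod_list (map (\<lambda>a. q a z) w)"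
definition tw :: "(nat \<Rightarrow> nat \<Rightarrow> 'a::comm_ring_1) \<Rightarrow> nat \<Rightarrow> (nat list \<Rightarrow> 'a) \<Rightarrow> nat list \<Rightarrow> 'a" where
  "tw q z f = (\<lambda>w. chi q w z * f w)"

lemma wsh_Nil2: "wsh q u [] w = (if w = u then 1 else 0)"
  by (cases u) auto

lemma wsh_Nil3: "wsh q u v [] = (if u = [] \<and> v = [] then 1 else 0)"
  by (cases u; cases v) auto

lemma wsh_rec: "wsh q u v (z#w) =
   (if u \<noteq> [] \<and> hd u = z then wsh q (tl u) v w else 0)
 + (if v \<noteq> [] \<and> hd v = z then chi q u z * wsh q u (tl v) w else 0)"
  by (cases u; cases v) (auto simp: wsh_Nil2 chi_def)

lemma subseqs_Cons_mem: "x \<in> set (subseqs (z#w)) \<longleftrightarrow> (\<exists>x'. x = z#x' \<and> x' \<in> set (subseqs w)) \<or> x \<in> set (subseqs w)"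
  by (auto simp: Let_def)

lemma subseqs_len_set: "u \<in> set (subseqs w) \<Longrightarrow> length u \<le> length w \<and> set u \<subseteq> set w"
proof (induction w arbitrary: u)
  case Nil then show ?case by simp
next
  case (Cons z w) then show ?case by (auto simp del: subseqs.simps simp: subseqs_Cons_mem) (fastforce)+
qed

lemma wsh_nz: "wsh q u v w \<noteq> 0 \<Longrightarrow> u \<in> set (subseqs w) \<and> v \<in> set (subseqs w) \<and> mset w = mset u + mset v"
proof (induction w arbitrary: u v)
  case Nil then show ?case by (simp add: wsh_Nil3 split: if_splits)
next
  case (Cons z w)
  show ?case
  proof (cases "u \<noteq> [] \<and> hd u = z \<and> wsh q (tl u) v w \<noteq> 0")
    case True
    then obtain u' where u: "u = z#u'" by (cases u) auto
    with True Cons.IH[of u' v] show ?thesis by (auto simp del: subseqs.simps simp: subseqs_Cons_mem)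
  next
    case False
    with Cons.prems have "v \<noteq> [] \<and> hd v = z \<and> wsh q u (tl v) w \<noteq> 0"
      by (auto simp: wsh_rec split: if_splits)
    then obtain v' where v: "v = z#v'" and "wsh q u v' w \<noteq> 0" by (cases v) auto
    with Cons.IH[of u v'] show ?thesis by (auto simp del: subseqs.simps simp: subseqs_Cons_mem)
  qed
qed

lemma shprod_superset:
  assumes "finite U" "finite V" "set (subseqs w) \<subseteq> U" "set (subseqs w) \<subseteq> V"
  shows "shprod q f g w = (\<Sum>u\<in>U. \<Sum>v\<in>V. f u * g v * wsh q u v w)"
proof -
  let ?S = "set (subseqs w)"
  have z1: "wsh q u v w = 0" if "u \<notin> ?S" for u v using wsh_nz[of q u v w] that by blast
  have z2: "wsh q u v w = 0" if "v \<notin> ?S" for u v using wsh_nz[of q u v w] that by blast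
  have "(\<Sum>u\<in>U. \<Sum>v\<in>V. f u * g v * wsh q u v w) = (\<Sum>u\<in>?S. \<Sum>v\<in>V. f u * g v * wsh q u v w)"
    by (rule sum.mono_neutral_right[OF assms(1) assms(3)]) (simp add: z1)
  also have "\<dots> = (\<Sum>u\<in>?S. \<Sum>v\<in>?S. f u * g v * wsh q u v w)"
    by (rule sum.cong[OF refl], rule sum.mono_neutral_right[OF assms(2) assms(4)]) (simp add: z2)
  finally show ?thesis by (simp add: shprod_def)
qed

lemma shprod_Nil: "shprod q f g [] = f [] * g []"
  by (simp add: shprod_def)

lemma shprod_Cons: "shprod q f g (z#w) = shprod q (dz z f) g w + shprod q (tw q z f) (dz z g) w"
proof -
  define U where "U = {u::nat list. length u \<le> Suc (length w) \<and> set u \<subseteq> insert z (set w)}"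
  define U' where "U' = {u::nat list. length u \<le> length w \<and> set u \<subseteq> insert z (set w)}"
  have fU: "finite U" unfolding U_def
    by (rule finite_subset[OF _ finite_lists_length_le[of "insert z (set w)" "Suc (length w)"]]) auto
  have fU': "finite U'" unfolding U'_def
    by (rule finite_subset[OF _ finite_lists_length_le[of "insert z (set w)" "length w"]]) auto
  have SU: "set (subseqs (z#w)) \<subseteq> U" unfolding U_def using subseqs_len_set[of _ "z#w"] by force
  have SU2: "set (subseqs w) \<subseteq> U" unfolding U_def using subseqs_len_set[of _ "w"] by force
  have SU': "set (subseqs w) \<subseteq> U'" unfolding U'_def using subseqs_len_set[of _ "w"] by force
  have img: "{u \<in> U. u \<noteq> [] \<and> hd u = z} = Cons z ` U'"
    unfolding U_def U'_def by (auto simp: image_iff neq_Nil_conv)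
  have "shprod q f g (z#w) = (\<Sum>u\<in>U. \<Sum>v\<in>U. f u * g v * wsh q u v (z#w))"
    by (rule shprod_superset[OF fU fU SU SU])
  also have "\<dots> = (\<Sum>u\<in>U. \<Sum>v\<in>U. (if u \<noteq> [] \<and> hd u = z then f u * g v * wsh q (tl u) v w else 0))
     + (\<Sum>u\<in>U. \<Sum>v\<in>U. (if v \<noteq> [] \<and> hd v = z then chi q u z * f u * g v * wsh q u (tl v) w else 0))"
    unfolding sum.distrib[symmetric] by (intro sum.cong refl) (simp add: wsh_rec algebra_simps)
  also have "(\<Sum>u\<in>U. \<Sum>v\<in>U. (if u \<noteq> [] \<and> hd u = z then f u * g v * wsh q (tl u) v w else 0))
      = (\<Sum>u\<in>{u \<in> U. u \<noteq> [] \<and> hd u = z}. \<Sum>v\<in>U. f u * g v * wsh q (tl u) v w)"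
    unfolding sum.inter_filter[OF fU] by (intro sum.cong refl) auto
  also have "\<dots> = (\<Sum>u\<in>U'. \<Sum>v\<in>U. f (z#u) * g v * wsh q u v w)"
    unfolding img by (subst sum.reindex) (auto simp: inj_on_def)
  also have "\<dots> = shprod q (dz z f) g w"
    by (simp add: shprod_superset[OF fU' fU SU' SU2] dz_def)
  also have "(\<Sum>u\<in>U. \<Sum>v\<in>U. (if v \<noteq> [] \<and> hd v = z then chi q u z * f u * g v * wsh q u (tl v) w else 0))
      = (\<Sum>u\<in>U. \<Sum>v\<in>{v \<in> U. v \<noteq> [] \<and> hd v = z}. chi q u z * f u * g v * wsh q u (tl v) w)"
    by (simp add: sum.inter_filter[OF fU])
  also have "\<dots> = (\<Sum>u\<in>U. \<Sum>v\<in>U'. chi q u z * f u * g (z#v) * wsh q u v w)"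
    unfolding img by (subst sum.reindex) (auto simp: inj_on_def)
  also have "\<dots> = shprod q (tw q z f) (dz z g) w"
    by (simp add: shprod_superset[OF fU fU' SU2 SU'] dz_def tw_def mult.assoc)
  finally show ?thesis .
qed



lemma dz_apply: "dz z f w = f (z#w)"
  by (simp add: dz_def)

lemma shprod_zero_left: "shprod q (\<lambda>w. 0) g = (\<lambda>w. 0)"
  by (simp add: shprod_def fun_eq_iff)
lemma shprod_zero_right: "shprod q f (\<lambda>w. 0) = (\<lambda>w. 0)"
  by (simp add: shprod_def fun_eq_iff)
lemma shprod_add_left: "shprod q (\<lambda>w. f w + g w) h = (\<lambda>w. shprod q f h w + shprod q g h w)"
  by (simp add: shprod_def fun_eq_iff algebra_simps sum.distrib)
lemma shprod_add_right: "shprod q h (\<lambda>w. f w + g w) = (\<lambda>w. shprod q h f w + shprod q h g w)"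
  by (simp add: shprod_def fun_eq_iff algebra_simps sum.distrib)
lemma shprod_diff_left: "shprod q (\<lambda>w. f w - g w) h = (\<lambda>w. shprod q f h w - shprod q g h w)"
  by (simp add: shprod_def fun_eq_iff algebra_simps sum_subtractf)
lemma shprod_diff_right: "shprod q h (\<lambda>w. f w - g w) = (\<lambda>w. shprod q h f w - shprod q h g w)"
  by (simp add: shprod_def fun_eq_iff algebra_simps sum_subtractf)
lemma shprod_smul_left: "shprod q (smul c f) g = smul c (shprod q f g)"
  by (simp add: shprod_def fun_eq_iff smul_def sum_distrib_left algebra_simps)
lemma shprod_smul_right: "shprod q f (smul c g) = smul c (shprod q f g)"
  by (simp add: shprod_def fun_eq_iff smul_def sum_distrib_left algebra_simps)

lemma smul_apply: "smul c f w = c * f w"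
  by (simp add: smul_def)

lemma smul_smul: "smul a (smul b f) = smul (a*b) f"
  by (simp add: smul_def fun_eq_iff)
lemma smul_one: "smul 1 f = f"
  by (simp add: smul_def fun_eq_iff)

lemma dz_monom_Nil: "dz z (Defs.monom []) = (\<lambda>w. 0)"
  by (simp add: dz_def monom_def fun_eq_iff)
lemma tw_monom_Nil: "tw q z (Defs.monom []) = Defs.monom []"
  by (simp add: tw_def monom_def fun_eq_iff chi_def)
lemma dz_tw: "dz y (tw q z f) = smul (q y z) (tw q z (dz y f))"
  by (simp add: dz_def tw_def smul_def chi_def fun_eq_iff)
lemma tw_tw: "tw q y (tw q z f) = tw q z (tw q y f)"
  by (simp add: tw_def fun_eq_iff algebra_simps)

lemma dz_shprod: "dz z (shprod q f g) = (\<lambda>w. shprod q (dz z f) g w + shprod q (tw q z f) (dz z g) w)"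
  by (rule ext) (subst dz_def, simp only: shprod_Cons)

lemma tw_shprod_pt: "\<forall>f g. tw q z (shprod q f g) w = shprod q (tw q z f) (tw q z g) w"
proof (induction w)
  case Nil then show ?case by (simp add: tw_def shprod_Nil chi_def)
next
  case (Cons y w)
  show ?case
  proof (intro allI)
    fix f g :: "nat list \<Rightarrow> 'a"
    have "tw q z (shprod q f g) (y#w) = q y z * (tw q z (shprod q (dz y f) g) w + tw q z (shprod q (tw q y f) (dz y g)) w)"
      by (simp add: tw_def chi_def shprod_Cons algebra_simps)
    also have "\<dots> = q y z * (shprod q (tw q z (dz y f)) (tw q z g) w + shprod q (tw q z (tw q y f)) (tw q z (dz y g)) w)"
      using Cons.IH by simp
    also have "\<dots> = shprod q (tw q z f) (tw q z g) (y#w)"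
      by (simp add: shprod_Cons dz_tw tw_tw shprod_smul_left shprod_smul_right smul_apply algebra_simps)
    finally show "tw q z (shprod q f g) (y#w) = shprod q (tw q z f) (tw q z g) (y#w)" .
  qed
qed

lemma tw_shprod: "tw q z (shprod q f g) = shprod q (tw q z f) (tw q z g)"
  using tw_shprod_pt by blast

lemma shprod_assoc_pt: "\<forall>f g h. shprod q (shprod q f g) h w = shprod q f (shprod q g h) w"
proof (induction w)
  case Nil then show ?case by (simp add: shprod_Nil)
next
  case (Cons z w)
  show ?case
  proof (intro allI)
    fix f g h :: "nat list \<Rightarrow> 'a"
    have "shprod q (shprod q f g) h (z#w) =
       shprod q (shprod q (dz z f) g) h w + shprod q (shprod q (tw q z f) (dz z g)) h w
     + shprod q (shprod q (tw q z f) (tw q z g)) (dz z h) w"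
      by (simp add: shprod_Cons dz_shprod tw_shprod shprod_add_left)
    also have "\<dots> = shprod q (dz z f) (shprod q g h) w + shprod q (tw q z f) (shprod q (dz z g) h) w
     + shprod q (tw q z f) (shprod q (tw q z g) (dz z h)) w"
      using Cons.IH by simp
    also have "\<dots> = shprod q f (shprod q g h) (z#w)"
      by (simp add: shprod_Cons dz_shprod shprod_add_right)
    finally show "shprod q (shprod q f g) h (z#w) = shprod q f (shprod q g h) (z#w)" .
  qed
qed

lemma shprod_assoc: "shprod q (shprod q f g) h = shprod q f (shprod q g h)"
  using shprod_assoc_pt by blast

lemma unit_left_pt: "\<forall>f. shprod q (Defs.monom []) f w = f w"
proof (induction w)
  case Nil then show ?case by (simp add: shprod_Nil monom_def)
next
  case (Cons z w) then show ?case
    by (simp add: shprod_Cons dz_monom_Nil tw_monom_Nil shprod_zero_left dz_apply)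
qed

lemma unit_right_pt: "\<forall>f. shprod q f (Defs.monom []) w = f w"
proof (induction w)
  case Nil then show ?case by (simp add: shprod_Nil monom_def)
next
  case (Cons z w) then show ?case
    by (simp add: shprod_Cons dz_monom_Nil shprod_zero_right dz_apply)
qed

lemma unit_left: "shprod q (Defs.monom []) f = f"
  using unit_left_pt by blast
lemma unit_right: "shprod q f (Defs.monom []) = f"
  using unit_right_pt by blast

lemma shpow_one: "shpow q f 1 = f"
  by (simp add: unit_right)

lemma shpow_add: "shpow q f (a + b) = shprod q (shpow q f a) (shpow q f b)"
  by (induction a) (simp_all add: unit_left shprod_assoc)

lemma shpow_Suc': "shpow q f (Suc m) = shprod q (shpow q f m) f"
  using shpow_add[of q f m 1] by (simp add: unit_right)



lemma br_smul: "br q u (smul c X) = smul c (br q u X)"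
  by (simp add: br_def shprod_smul_left shprod_smul_right smul_apply fun_eq_iff algebra_simps)

lemma br_pow_smul: "(br q u ^^ j) (smul c X) = smul c ((br q u ^^ j) X)"
  by (induction j) (simp_all add: br_smul)

lemma comm_pow:
  assumes "shprod q x y = smul s (shprod q y x)"
  shows "shprod q x (shpow q y m) = smul (s^m) (shprod q (shpow q y m) x)"
proof (induction m)
  case 0 then show ?case by (simp add: unit_left unit_right smul_one)
next
  case (Suc m)
  have "shprod q x (shpow q y (Suc m)) = shprod q (shprod q x y) (shpow q y m)"
    by (simp add: shprod_assoc)
  also have "\<dots> = smul s (shprod q y (shprod q x (shpow q y m)))"
    by (simp add: assms shprod_smul_left shprod_assoc)
  also have "\<dots> = smul (s^Suc m) (shprod q (shpow q y (Suc m)) x)"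
    by (simp add: Suc shprod_smul_right smul_smul shprod_assoc)
  finally show ?case .
qed

lemma br_iter:
  assumes "shprod q u B = smul \<rho> (shprod q B u)"
  shows "(br q u ^^ j) B = smul ((\<rho>-1)^j) (shprod q B (shpow q u j))"
proof (induction j)
  case 0 then show ?case by (simp add: unit_right smul_one)
next
  case (Suc j)
  have e1: "shprod q u (shprod q B (shpow q u j)) = smul \<rho> (shprod q B (shpow q u (Suc j)))"
    by (simp add: shprod_assoc[symmetric] assms shprod_smul_left)
  have e2: "shprod q (shprod q B (shpow q u j)) u = shprod q B (shpow q u (Suc j))"
    by (simp only: shprod_assoc shpow_Suc')
  have "(br q u ^^ Suc j) B = smul ((\<rho>-1)^j) (br q u (shprod q B (shpow q u j)))"
    by (simp add: Suc br_smul)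
  also have "br q u (shprod q B (shpow q u j)) = smul (\<rho> - 1) (shprod q B (shpow q u (Suc j)))"
    unfolding br_def e1 e2 by (simp add: smul_def fun_eq_iff algebra_simps)
  finally show ?case by (simp add: smul_smul mult.commute)
qed

definition Bf where
  "Bf q u m t = foldl (\<lambda>a i. shprod q a (shpow q (u i) (m i))) (u (1::nat)) [2..<Suc t]"
definition Af where
  "Af q u m t = foldl (\<lambda>a i. (br q (u i) ^^ m i) a) (u (1::nat)) [2..<Suc t]"

lemma Bf_Suc: "1 \<le> t \<Longrightarrow> Bf q u m (Suc t) = shprod q (Bf q u m t) (shpow q (u (Suc t)) (m (Suc t)))"
  unfolding Bf_def by (simp del: upt_Suc add: upt_Suc_append)
lemma Af_Suc: "1 \<le> t \<Longrightarrow> Af q u m (Suc t) = (br q (u (Suc t)) ^^ m (Suc t)) (Af q u m t)"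
  unfolding Af_def by (simp del: upt_Suc add: upt_Suc_append)
lemma Bf_1: "Bf q u m (Suc 0) = u (Suc 0)" by (simp add: Bf_def)
lemma Af_1: "Af q u m (Suc 0) = u (Suc 0)" unfolding Af_def by (simp del: upt_Suc add: upt_conv_Nil)

lemma Bf_comm:
  assumes comm: "\<forall>i\<in>{1..k}. \<forall>j\<in>{1..k}. shprod q (u i) (u j) = smul (r i j) (shprod q (u j) (u i))"
    and i: "i \<in> {1..k}"
  shows "1 \<le> t \<Longrightarrow> t \<le> k \<Longrightarrow> shprod q (u i) (Bf q u m t) = smul (r i 1 * (\<Prod>j=2..t. r i j ^ m j)) (shprod q (Bf q u m t) (u i))"
proof (induction t rule: nat_induct_at_least)
  case base
  have "1 \<in> {1..k}" using base by auto
  then have "shprod q (u i) (u 1) = smul (r i 1) (shprod q (u 1) (u i))" using comm i by blast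
  then show ?case by (simp add: Bf_1)
next
  case (Suc t)
  let ?P = "shpow q (u (Suc t)) (m (Suc t))"
  have cP: "shprod q (u i) ?P = smul (r i (Suc t) ^ m (Suc t)) (shprod q ?P (u i))"
  proof (rule comm_pow)
    have "Suc t \<in> {1..k}" using Suc by auto
    then show "shprod q (u i) (u (Suc t)) = smul (r i (Suc t)) (shprod q (u (Suc t)) (u i))" using comm i by blast
  qed
  have "shprod q (u i) (Bf q u m (Suc t)) = shprod q (shprod q (u i) (Bf q u m t)) ?P"
    using Suc by (simp add: Bf_Suc shprod_assoc[symmetric])
  also have "\<dots> = smul (r i 1 * (\<Prod>j=2..t. r i j ^ m j)) (shprod q (Bf q u m t) (shprod q (u i) ?P))"
    using Suc by (simp add: shprod_smul_left shprod_assoc)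
  also have "\<dots> = smul (r i 1 * (\<Prod>j=2..Suc t. r i j ^ m j)) (shprod q (Bf q u m (Suc t)) (u i))"
    using Suc by (simp add: cP shprod_smul_right smul_smul Bf_Suc shprod_assoc mult_ac)
  finally show ?case .
qed

lemma part_i:
  assumes comm: "\<forall>i\<in>{1..k}. \<forall>j\<in>{1..k}. shprod q (u i) (u j) = smul (r i j) (shprod q (u j) (u i))"
  shows "1 \<le> t \<Longrightarrow> t \<le> k \<Longrightarrow> Af q u m t = smul (\<Prod>i=2..t. (r i 1 * (\<Prod>j=2..i-1. r i j ^ m j) - 1) ^ m i) (Bf q u m t)"
proof (induction t rule: nat_induct_at_least)
  case base
  show ?case by (simp add: Af_1 Bf_1 smul_one)
next
  case (Suc t)
  have c: "shprod q (u (Suc t)) (Bf q u m t) = smul (r (Suc t) 1 * (\<Prod>j=2..t. r (Suc t) j ^ m j)) (shprod q (Bf q u m t) (u (Suc t)))"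
    by (rule Bf_comm[OF comm]) (use Suc in auto)
  show ?case
    using Suc by (simp add: Af_Suc Bf_Suc br_pow_smul br_iter[OF c] smul_smul mult_ac)
qed



lemma br_pow_L: "f \<in> lie_minus q n \<Longrightarrow> g \<in> lie_minus q n \<Longrightarrow> (br q g ^^ j) f \<in> lie_minus q n"
  by (induction j) (auto intro: lie_minus.bracket)

lemma smul_inv_cancel: "(c::'a::field) \<noteq> 0 \<Longrightarrow> smul (1/c) (smul c f) = f"
  by (simp add: smul_def fun_eq_iff)

lemma L_smul_cancel: "smul (c::'a::field) f \<in> lie_minus q n \<Longrightarrow> c \<noteq> 0 \<Longrightarrow> f \<in> lie_minus q n"
  using lie_minus.smul[of "smul c f" q n "1/c"] by (simp add: smul_inv_cancel)

lemma Af_L: assumes L: "\<forall>i\<in>{1..k}. u i \<in> lie_minus q n" shows "1 \<le> t \<Longrightarrow> t \<le> k \<Longrightarrow> Af q u m t \<in> lie_minus q n"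
proof (induction t rule: nat_induct_at_least)
  case base then show ?case using L by (simp add: Af_1)
next
  case (Suc t) then show ?case using L by (simp add: Af_Suc br_pow_L)
qed

lemma part_ii:
  fixes u :: "nat \<Rightarrow> nat list \<Rightarrow> 'a::field"
  assumes comm: "\<forall>i\<in>{1..k}. \<forall>j\<in>{1..k}. shprod q (u i) (u j) = smul (r i j) (shprod q (u j) (u i))"
    and k: "2 \<le> k" and L: "\<forall>i\<in>{1..k}. u i \<in> lie_minus q n"
    and R: "\<forall>i\<in>{2..k}. (\<Prod>j=1..i-1. r i j) \<noteq> 1"
  shows "foldl (\<lambda>a i. shprod q a (u i)) (u 1) [2..<Suc k] \<in> lie_minus q n"
proof -
  let ?m = "\<lambda>_::nat. 1::nat"
  let ?c = "\<Prod>i=2..k. (r i 1 * (\<Prod>j=2..i-1. r i j ^ ?m j) - 1) ^ ?m i"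
  have A: "Af q u ?m k = smul ?c (Bf q u ?m k)"
    using part_i[OF comm, of k ?m] k by simp
  have cne: "?c \<noteq> 0"
  proof -
    have "r i 1 * (\<Prod>j=2..i-1. r i j ^ ?m j) - 1 \<noteq> 0" if "i \<in> {2..k}" for i
    proof -
      have "(\<Prod>j=1..i-1. r i j) = r i 1 * (\<Prod>j=2..i-1. r i j)"
        using that by (subst prod.atLeast_Suc_atMost) (auto simp: numeral_2_eq_2)
      moreover have "(\<Prod>j=1..i-1. r i j) \<noteq> 1" using R that by blast
      ultimately show ?thesis by simp
    qed
    then show ?thesis by (simp add: prod_zero_iff)
  qed
  have AL: "Af q u ?m k \<in> lie_minus q n" using Af_L[OF L, of k] k by simp
  have "Bf q u ?m k \<in> lie_minus q n"
  proof (rule L_smul_cancel[OF _ cne])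
    show "smul ?c (Bf q u ?m k) \<in> lie_minus q n" using AL unfolding A .
  qed
  moreover have "Bf q u ?m k = foldl (\<lambda>a i. shprod q a (u i)) (u 1) [2..<Suc k]"
    unfolding Bf_def by (simp add: unit_right)
  ultimately show ?thesis by simp
qed

lemma comm_pow2:
  assumes "shprod q x y = smul s (shprod q y x)"
  shows "shprod q (shpow q x a) (shpow q y b) = smul (s^(a*b)) (shprod q (shpow q y b) (shpow q x a))"
proof (induction a)
  case 0 then show ?case by (simp add: unit_left unit_right smul_one)
next
  case (Suc a)
  have "shprod q (shpow q x (Suc a)) (shpow q y b) = shprod q x (shprod q (shpow q x a) (shpow q y b))"
    by (simp add: shprod_assoc)
  also have "\<dots> = smul (s^(a*b)) (shprod q (shprod q x (shpow q y b)) (shpow q x a))"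
    by (simp add: Suc shprod_smul_right shprod_assoc)
  also have "\<dots> = smul (s^(Suc a*b)) (shprod q (shpow q y b) (shpow q x (Suc a)))"
    by (simp add: comm_pow[OF assms] shprod_smul_left smul_smul shprod_assoc power_add mult_ac)
  finally show ?case .
qed

lemma case1:
  fixes x y :: "nat list \<Rightarrow> 'a::field"
  assumes xL: "x \<in> lie_minus q n" and yL: "y \<in> lie_minus q n"
    and xy: "shprod q x y = smul s (shprod q y x)" and yx: "shprod q y x = smul t (shprod q x y)"
    and s1: "s \<noteq> 1" and t0: "t \<noteq> 0" and ta: "t^a \<noteq> 1" and b: "1 \<le> b"
  shows "shprod q (shpow q x a) (shpow q y b) \<in> lie_minus q n"
proof -
  let ?B = "shprod q (shpow q x a) y"
  have E1: "(br q x ^^ a) y = smul ((s-1)^a) (shprod q y (shpow q x a))"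
    by (rule br_iter[OF xy])
  have E2: "shprod q y (shpow q x a) = smul (t^a) ?B"
    by (rule comm_pow[OF yx])
  have "smul ((s-1)^a * t^a) ?B \<in> lie_minus q n"
    using br_pow_L[OF yL xL, of a] E1 E2 by (simp add: smul_smul)
  then have BL: "?B \<in> lie_minus q n"
    by (rule L_smul_cancel) (use s1 t0 in simp)
  have E3: "shprod q y ?B = smul (t^a) (shprod q ?B y)"
    by (simp add: shprod_assoc[symmetric] E2 shprod_smul_left)
  have E4: "(br q y ^^ (b-1)) ?B = smul ((t^a-1)^(b-1)) (shprod q ?B (shpow q y (b-1)))"
    by (rule br_iter[OF E3])
  have E5: "shprod q ?B (shpow q y (b-1)) = shprod q (shpow q x a) (shpow q y b)"
    using b by (cases b) (simp_all add: shprod_assoc)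
  show ?thesis
    using br_pow_L[OF BL yL, of "b-1"] E4 E5 L_smul_cancel[of "(t^a-1)^(b-1)"] ta by simp
qed

lemma ord_dvd_iff: "1 \<le> a \<Longrightarrow> ord_dvd (s::'a::field) a \<longleftrightarrow> s^a = 1"
proof -
  assume a: "1 \<le> a"
  show ?thesis
  proof (cases "\<exists>k>0. s ^ k = 1")
    case False
    have a0: "a > 0" using a by simp
    have "s^a \<noteq> 1" using False a0 by blast
    moreover have "mult_order s = None" using False unfolding mult_order_def by argo
    ultimately show ?thesis by (simp add: ord_dvd_def)
  next
    case True
    define d where "d = (LEAST k. k > 0 \<and> s ^ k = 1)"
    have d: "d > 0" "s^d = 1" using LeastI_ex[OF True] unfolding d_def by auto
    have dmin: "\<And>k. 0 < k \<Longrightarrow> s^k = 1 \<Longrightarrow> d \<le> k" unfolding d_def by (auto intro: Least_le)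
    have "d dvd a \<longleftrightarrow> s^a = 1"
    proof
      assume "d dvd a" then obtain c where "a = d*c" by auto
      then show "s^a = 1" using d by (simp add: power_mult)
    next
      assume sa: "s^a = 1"
      have "a = d * (a div d) + a mod d" by simp
      then have "s^a = (s^d)^(a div d) * s^(a mod d)" by (metis power_add power_mult)
      then have "s^(a mod d) = 1" using sa d by simp
      moreover have "a mod d < d" using d by simp
      ultimately have "a mod d = 0" using dmin by (meson not_less neq0_conv)
      then show "d dvd a" by auto
    qed
    then show ?thesis using True by (simp add: ord_dvd_def mult_order_def d_def)
  qed
qed

lemma prod_nonzero:
  assumes P: "shprod q (shpow q v1 a1) (shpow q v2 a2) \<noteq> (\<lambda>w. 0)" and a1: "1 \<le> a1" and a2: "1 \<le> a2"
  shows "shprod q v1 v2 \<noteq> (\<lambda>w. 0)"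
proof
  assume z: "shprod q v1 v2 = (\<lambda>w. 0)"
  obtain a b where a: "a1 = Suc a" and b: "a2 = Suc b" using a1 a2 by (metis Suc_le_D One_nat_def)
  have "shprod q (shpow q v1 a1) (shpow q v2 a2)
      = shprod q (shpow q v1 a) (shprod q (shprod q v1 v2) (shpow q v2 b))"
  proof -
    have e1: "shpow q v1 a1 = shprod q (shpow q v1 a) v1" by (simp only: a shpow_Suc')
    have e2: "shpow q v2 a2 = shprod q v2 (shpow q v2 b)" by (simp add: b)
    show ?thesis by (simp only: e1 e2 shprod_assoc)
  qed
  also have "\<dots> = (\<lambda>w. 0)" by (simp add: z shprod_zero_left shprod_zero_right)
  finally show False using P by simp
qed

lemma part_iii:
  fixes v1 v2 :: "nat list \<Rightarrow> 'a::field"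
  assumes L1: "v1 \<in> lie_minus q n" and L2: "v2 \<in> lie_minus q n"
    and s12: "s12 \<noteq> 0" and s21: "s21 \<noteq> 0"
    and c12: "shprod q v1 v2 = smul s12 (shprod q v2 v1)"
    and c21: "shprod q v2 v1 = smul s21 (shprod q v1 v2)"
    and a1: "1 \<le> a1" and a2: "1 \<le> a2"
    and P: "shprod q (shpow q v1 a1) (shpow q v2 a2) \<noteq> (\<lambda>w. 0)"
    and ord: "\<not> ord_dvd s21 a1 \<or> \<not> ord_dvd s12 a2"
  shows "shprod q (shpow q v1 a1) (shpow q v2 a2) \<in> lie_minus q n"
proof -
  have "shprod q v1 v2 \<noteq> (\<lambda>w. 0)" by (rule prod_nonzero[OF P a1 a2])
  then obtain w where w: "shprod q v1 v2 w \<noteq> 0" by auto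
  have "shprod q v1 v2 w = s12 * s21 * shprod q v1 v2 w"
    by (subst c12, simp add: smul_def c21)
  with w have ss: "s12 * s21 = 1" by simp
  from ord show ?thesis
  proof
    assume "\<not> ord_dvd s21 a1"
    then have t: "s21 ^ a1 \<noteq> 1" using ord_dvd_iff[OF a1, of s21] by blast
    then have "s21 \<noteq> 1" by auto
    then have "s12 \<noteq> 1" using ss by auto
    then show ?thesis by (rule case1[OF L1 L2 c12 c21 _ s21 t a2])
  next
    assume "\<not> ord_dvd s12 a2"
    then have t: "s12 ^ a2 \<noteq> 1" using ord_dvd_iff[OF a2, of s12] by blast
    then have "s12 \<noteq> 1" by auto
    then have "s21 \<noteq> 1" using ss by auto
    then have "shprod q (shpow q v2 a2) (shpow q v1 a1) \<in> lie_minus q n"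
      by (rule case1[OF L2 L1 c21 c12 _ s12 t a1])
    moreover have "shprod q (shpow q v2 a2) (shpow q v1 a1) = smul (s21^(a2*a1)) (shprod q (shpow q v1 a1) (shpow q v2 a2))"
      by (rule comm_pow2[OF c21])
    ultimately show ?thesis using L_smul_cancel s21 by fastforce
  qed
qed



definition comp :: "nat multiset \<Rightarrow> (nat list \<Rightarrow> 'a::comm_ring_1) \<Rightarrow> nat list \<Rightarrow> 'a" where
  "comp D f = (\<lambda>w. if mset w = D then f w else 0)"

definition supp_in :: "(nat list \<Rightarrow> 'a::zero) \<Rightarrow> nat multiset \<Rightarrow> bool" where
  "supp_in f D = (\<forall>w. f w \<noteq> 0 \<longrightarrow> mset w = D)"

lemma supp_in_shprod:
  assumes "supp_in f D1" "supp_in g D2"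
  shows "supp_in (shprod q f g) (D1 + D2)"
  unfolding supp_in_def
proof (intro allI impI)
  fix w assume "shprod q f g w \<noteq> 0"
  then obtain u v where "f u * g v * wsh q u v w \<noteq> 0"
    unfolding shprod_def by (meson sum.not_neutral_contains_not_neutral)
  then have h: "f u \<noteq> 0" "g v \<noteq> 0" "wsh q u v w \<noteq> 0" by auto
  have "mset u = D1" "mset v = D2" using h assms unfolding supp_in_def by auto
  then show "mset w = D1 + D2" using wsh_nz[OF h(3)] by simp
qed

lemma supp_in_monom: "supp_in (Defs.monom [] :: nat list \<Rightarrow> 'a::comm_ring_1) {#}"
  by (simp add: supp_in_def monom_def)

lemma supp_in_gen: "supp_in (gen i :: nat list \<Rightarrow> 'a::comm_ring_1) {#i#}"
  by (simp add: supp_in_def gen_def monom_def)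

lemma supp_in_pow: "supp_in (f::nat list \<Rightarrow> 'a::comm_ring_1) D \<Longrightarrow> supp_in (shpow q f N) (repeat_mset N D)"
  by (induction N) (simp_all add: supp_in_monom supp_in_shprod)

lemma comp_supp: "supp_in f D \<Longrightarrow> comp D f = f"
  by (auto simp: supp_in_def comp_def fun_eq_iff)

lemma comp_add: "comp D (\<lambda>w. f w + g w) = (\<lambda>w. comp D f w + comp D g w)"
  by (simp add: comp_def fun_eq_iff)
lemma comp_smul: "comp D (smul c f) = smul c (comp D f)"
  by (simp add: comp_def smul_def fun_eq_iff)
lemma comp_br: "comp D (br q f g) = (\<lambda>w. comp D (shprod q f g) w - comp D (shprod q g f) w)"
  by (simp add: comp_def br_def fun_eq_iff)
lemma comp_gen: "comp D (gen j) = (if D = {#j#} then gen j else (\<lambda>w. 0))"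
  by (auto simp: comp_def gen_def monom_def fun_eq_iff)

lemma comp_decomp:
  assumes fin: "finite I" and sumD: "\<forall>d\<in>I. D1 d + D2 d = D"
    and uniq: "\<forall>M1 M2. M1 + M2 = D \<longrightarrow> (\<exists>!d. d \<in> I \<and> M1 = D1 d \<and> M2 = D2 d)"
  shows "comp D (shprod q f g) w = (\<Sum>d\<in>I. shprod q (comp (D1 d) f) (comp (D2 d) g) w)"
proof -
  let ?S = "set (subseqs w)"
  have trm: "(\<Sum>d\<in>I. comp (D1 d) f u * comp (D2 d) g v * wsh q u v w)
      = (if mset w = D then f u * g v * wsh q u v w else 0)" for u v
  proof (cases "wsh q u v w = 0")
    case True then show ?thesis by simp
  next
    case False
    then have mw: "mset w = mset u + mset v" using wsh_nz by blast
    show ?thesis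
    proof (cases "mset w = D")
      case True
      have ex1: "\<exists>!d. d \<in> I \<and> mset u = D1 d \<and> mset v = D2 d"
        using uniq[rule_format, of "mset u" "mset v"] mw True by simp
      then obtain d0 where d0: "d0 \<in> I" "mset u = D1 d0" "mset v = D2 d0"
        and un: "\<And>d. d \<in> I \<Longrightarrow> mset u = D1 d \<Longrightarrow> mset v = D2 d \<Longrightarrow> d = d0"
        by blast
      have "(\<Sum>d\<in>I. comp (D1 d) f u * comp (D2 d) g v * wsh q u v w)
          = (\<Sum>d\<in>{d0}. comp (D1 d) f u * comp (D2 d) g v * wsh q u v w)"
      proof (rule sum.mono_neutral_right[OF fin])
        show "{d0} \<subseteq> I" using d0 by simp
        show "\<forall>d\<in>I - {d0}. comp (D1 d) f u * comp (D2 d) g v * wsh q u v w = 0"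
        proof
          fix d assume "d \<in> I - {d0}"
          then have "\<not> (mset u = D1 d \<and> mset v = D2 d)" using un by blast
          then show "comp (D1 d) f u * comp (D2 d) g v * wsh q u v w = 0" by (auto simp: comp_def)
        qed
      qed
      then show ?thesis using d0 True by (simp add: comp_def)
    next
      case False
      have "comp (D1 d) f u * comp (D2 d) g v = 0" if "d \<in> I" for d
        using sumD that False mw by (auto simp: comp_def)
      then show ?thesis using False by simp
    qed
  qed
  have "(\<Sum>d\<in>I. shprod q (comp (D1 d) f) (comp (D2 d) g) w)
      = (\<Sum>d\<in>I. \<Sum>u\<in>?S. \<Sum>v\<in>?S. comp (D1 d) f u * comp (D2 d) g v * wsh q u v w)"
    by (simp add: shprod_def)
  also have "\<dots> = (\<Sum>u\<in>?S. \<Sum>d\<in>I. \<Sum>v\<in>?S. comp (D1 d) f u * comp (D2 d) g v * wsh q u v w)"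
    by (rule sum.swap)
  also have "\<dots> = (\<Sum>u\<in>?S. \<Sum>v\<in>?S. \<Sum>d\<in>I. comp (D1 d) f u * comp (D2 d) g v * wsh q u v w)"
    by (rule sum.cong[OF refl], rule sum.swap)
  also have "\<dots> = (\<Sum>u\<in>?S. \<Sum>v\<in>?S. (if mset w = D then f u * g v * wsh q u v w else 0))"
    by (simp add: trm)
  also have "\<dots> = comp D (shprod q f g) w"
    by (simp add: comp_def shprod_def)
  finally show ?thesis by simp
qed

lemma sum_smul: "(\<Sum>d\<in>I. smul (c d) X w) = smul (\<Sum>d\<in>I. c d) X w"
  by (simp add: smul_def sum_distrib_right)



definition Dg2 :: "nat \<Rightarrow> nat \<Rightarrow> nat \<Rightarrow> nat \<Rightarrow> nat multiset" where
  "Dg2 i1 i2 b1 b2 = replicate_mset b1 i1 + replicate_mset b2 i2"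
definition X2 :: "(nat \<Rightarrow> nat \<Rightarrow> 'a::comm_ring_1) \<Rightarrow> nat \<Rightarrow> nat \<Rightarrow> nat \<Rightarrow> nat \<Rightarrow> nat list \<Rightarrow> 'a" where
  "X2 q i1 i2 b1 b2 = shprod q (shpow q (gen i1) b1) (shpow q (gen i2) b2)"
definition good2 where
  "good2 q i1 i2 (t::'a::field) f b1 b2 c = (comp (Dg2 i1 i2 b1 b2) f = smul c (X2 q i1 i2 b1 b2)
      \<and> (t^b1 = 1 \<and> t^b2 = 1 \<and> b1 + b2 \<noteq> 1 \<longrightarrow> c = 0))"

lemma uniq2:
  assumes ne: "i1 \<noteq> i2" and M: "M1 + M2 = Dg2 i1 i2 b1 b2"
  shows "\<exists>!d. d \<in> {0..b1} \<times> {0..b2} \<and> M1 = Dg2 i1 i2 (fst d) (snd d) \<and> M2 = Dg2 i1 i2 (b1 - fst d) (b2 - snd d)"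
proof -
  have cnt: "count M1 j + count M2 j = (if j = i1 then b1 else 0) + (if j = i2 then b2 else 0)" for j
    using arg_cong[OF M, of "\<lambda>M. count M j"] by (simp add: Dg2_def)
  let ?d = "(count M1 i1, count M1 i2)"
  have e1c: "count M1 j = count (Dg2 i1 i2 (count M1 i1) (count M1 i2)) j" for j
    using cnt[of j] ne by (cases "j = i1"; cases "j = i2") (auto simp: Dg2_def)
  have e1: "M1 = Dg2 i1 i2 (count M1 i1) (count M1 i2)"
    unfolding multiset_eq_iff using e1c by blast
  have e2c: "count M2 j = count (Dg2 i1 i2 (b1 - count M1 i1) (b2 - count M1 i2)) j" for j
    using cnt[of j] cnt[of i1] cnt[of i2] ne by (cases "j = i1"; cases "j = i2") (auto simp: Dg2_def)
  have e2: "M2 = Dg2 i1 i2 (b1 - count M1 i1) (b2 - count M1 i2)"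
    unfolding multiset_eq_iff using e2c by blast
  have r: "?d \<in> {0..b1} \<times> {0..b2}" using cnt[of i1] cnt[of i2] ne by auto
  show ?thesis
  proof (rule ex1I[of _ ?d])
    show "?d \<in> {0..b1} \<times> {0..b2} \<and> M1 = Dg2 i1 i2 (fst ?d) (snd ?d) \<and> M2 = Dg2 i1 i2 (b1 - fst ?d) (b2 - snd ?d)"
      using r e1 e2 by simp
  next
    fix d assume "d \<in> {0..b1} \<times> {0..b2} \<and> M1 = Dg2 i1 i2 (fst d) (snd d) \<and> M2 = Dg2 i1 i2 (b1 - fst d) (b2 - snd d)"
    then have "M1 = Dg2 i1 i2 (fst d) (snd d)" by simp
    then show "d = ?d" using ne by (cases d) (simp add: Dg2_def)
  qed
qed

lemma Dg2_add: "d1 \<le> b1 \<Longrightarrow> d2 \<le> b2 \<Longrightarrow> Dg2 i1 i2 d1 d2 + Dg2 i1 i2 (b1 - d1) (b2 - d2) = Dg2 i1 i2 b1 b2"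
  by (simp add: Dg2_def multiset_eq_iff)

lemma XX:
  assumes yx: "shprod q (gen i2) (gen i1) = smul t (shprod q (gen i1) (gen i2))"
  shows "shprod q (X2 q i1 i2 d1 d2) (X2 q i1 i2 e1 e2) = smul (t^(d2*e1)) (X2 q i1 i2 (d1+e1) (d2+e2))"
proof -
  let ?x = "gen i1 :: nat list \<Rightarrow> 'a" and ?y = "gen i2 :: nat list \<Rightarrow> 'a"
  have "shprod q (X2 q i1 i2 d1 d2) (X2 q i1 i2 e1 e2) =
     shprod q (shpow q ?x d1) (shprod q (shprod q (shpow q ?y d2) (shpow q ?x e1)) (shpow q ?y e2))"
    by (simp add: X2_def shprod_assoc)
  also have "\<dots> = smul (t^(d2*e1)) (shprod q (shprod q (shpow q ?x d1) (shpow q ?x e1)) (shprod q (shpow q ?y d2) (shpow q ?y e2)))"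
    by (simp add: comm_pow2[OF yx] shprod_smul_left shprod_smul_right shprod_assoc)
  also have "\<dots> = smul (t^(d2*e1)) (X2 q i1 i2 (d1+e1) (d2+e2))"
    by (simp add: X2_def shpow_add)
  finally show ?thesis .
qed

lemma pow_ident:
  fixes t :: "'a::field"
  assumes "t \<noteq> 0" "t^b1 = 1" "t^b2 = 1" "d1 \<le> b1" "d2 \<le> b2"
  shows "t^(d2*(b1-d1)) = t^((b2-d2)*d1)"
proof -
  have "t^(d2*(b1-d1)) * t^(d1*d2) = t^(d2*b1)"
    using assms by (simp add: power_add[symmetric] algebra_simps diff_mult_distrib2)
  moreover have "t^(d2*b1) = 1" using assms by (simp add: power_mult[symmetric] mult.commute[of d2] power_mult)
  moreover have "t^((b2-d2)*d1) * t^(d1*d2) = t^(d1*b2)"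
    using assms by (simp add: power_add[symmetric] algebra_simps diff_mult_distrib)
  moreover have "t^(d1*b2) = 1" using assms by (simp add: mult.commute[of d1] power_mult)
  ultimately show ?thesis using assms(1) by (metis mult_cancel_right power_not_zero)
qed

lemma X2_10: "X2 q i1 i2 (Suc 0) 0 = gen i1" by (simp add: X2_def unit_right)
lemma X2_01: "X2 q i1 i2 0 (Suc 0) = gen i2" by (simp add: X2_def unit_right unit_left)

lemma inv2:
  fixes q :: "nat \<Rightarrow> nat \<Rightarrow> 'a::field"
  assumes ne: "i1 \<noteq> i2" and t0: "t \<noteq> 0"
    and yx: "shprod q (gen i2) (gen i1) = smul t (shprod q (gen i1) (gen i2))"
  shows "f \<in> lie_minus q n \<Longrightarrow> \<forall>b1 b2. \<exists>c. good2 q i1 i2 t f b1 b2 c"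
proof (induction f rule: lie_minus.induct)
  case (gen j)
  show ?case
  proof (intro allI)
    fix b1 b2 :: nat
    show "\<exists>c. good2 q i1 i2 t (gen j) b1 b2 c"
    proof (cases "Dg2 i1 i2 b1 b2 = {#j#}")
      case True
      then have "size (Dg2 i1 i2 b1 b2) = 1" by simp
      then have "b1 + b2 = 1" by (simp add: Dg2_def)
      then have "(b1 = 1 \<and> b2 = 0) \<or> (b1 = 0 \<and> b2 = 1)" by auto
      then show ?thesis
      proof
        assume b: "b1 = 1 \<and> b2 = 0"
        then have "j = i1" using True by (simp add: Dg2_def)
        then show ?thesis using b True by (intro exI[of _ 1]) (simp add: good2_def comp_gen X2_10 smul_one)
      next
        assume b: "b1 = 0 \<and> b2 = 1"
        then have "j = i2" using True by (simp add: Dg2_def)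
        then show ?thesis using b True by (intro exI[of _ 1]) (simp add: good2_def comp_gen X2_01 smul_one)
      qed
    next
      case False
      then show ?thesis by (intro exI[of _ 0]) (simp add: good2_def comp_gen smul_def)
    qed
  qed
next
  case (add f g)
  show ?case
  proof (intro allI)
    fix b1 b2 :: nat
    obtain c1 c2 where "good2 q i1 i2 t f b1 b2 c1" "good2 q i1 i2 t g b1 b2 c2" using add.IH by blast
    then show "\<exists>c. good2 q i1 i2 t (\<lambda>w. f w + g w) b1 b2 c"
      by (intro exI[of _ "c1 + c2"]) (auto simp: good2_def comp_add smul_def algebra_simps)
  qed
next
  case (smul f c')
  show ?case
  proof (intro allI)
    fix b1 b2 :: nat
    obtain c1 where "good2 q i1 i2 t f b1 b2 c1" using smul.IH by blast
    then show "\<exists>c. good2 q i1 i2 t (smul c' f) b1 b2 c"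
      by (intro exI[of _ "c' * c1"]) (auto simp: good2_def comp_smul smul_smul)
  qed
next
  case (bracket f g)
  obtain Cf where Cf: "\<forall>p. good2 q i1 i2 t f (fst p) (snd p) (Cf p)"
    using choice[of "\<lambda>p c. good2 q i1 i2 t f (fst p) (snd p) c"] bracket.IH by blast
  obtain Cg where Cg: "\<forall>p. good2 q i1 i2 t g (fst p) (snd p) (Cg p)"
    using choice[of "\<lambda>p c. good2 q i1 i2 t g (fst p) (snd p) c"] bracket.IH by blast
  show ?case
  proof (intro allI)
    fix b1 b2 :: nat
    let ?I = "{0..b1} \<times> {0..b2}"
    let ?X = "X2 q i1 i2 b1 b2"
    let ?D = "Dg2 i1 i2 b1 b2"
    let ?e = "\<lambda>d. t^(snd d * (b1 - fst d))"
    have fI: "finite ?I" by simp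
    have sD: "\<forall>d\<in>?I. Dg2 i1 i2 (fst d) (snd d) + Dg2 i1 i2 (b1 - fst d) (b2 - snd d) = ?D"
      by (auto simp: Dg2_add)
    have un: "\<forall>M1 M2. M1 + M2 = ?D \<longrightarrow> (\<exists>!d. d \<in> ?I \<and> M1 = Dg2 i1 i2 (fst d) (snd d) \<and> M2 = Dg2 i1 i2 (b1 - fst d) (b2 - snd d))"
      using uniq2[OF ne] by blast
    have prod_comp: "comp ?D (shprod q F G) = smul (\<Sum>d\<in>?I. CF d * CG (b1 - fst d, b2 - snd d) * ?e d) ?X"
      if CF: "\<forall>p. good2 q i1 i2 t F (fst p) (snd p) (CF p)" and CG: "\<forall>p. good2 q i1 i2 t G (fst p) (snd p) (CG p)" for F G CF CG
    proof (rule ext)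
      fix w
      have "comp ?D (shprod q F G) w = (\<Sum>d\<in>?I. shprod q (comp (Dg2 i1 i2 (fst d) (snd d)) F) (comp (Dg2 i1 i2 (b1 - fst d) (b2 - snd d)) G) w)"
        by (rule comp_decomp[OF fI sD un])
      also have "\<dots> = (\<Sum>d\<in>?I. smul (CF d * CG (b1 - fst d, b2 - snd d) * ?e d) ?X w)"
      proof (rule sum.cong[OF refl])
        fix d assume d: "d \<in> ?I"
        have c1: "comp (Dg2 i1 i2 (fst d) (snd d)) F = smul (CF d) (X2 q i1 i2 (fst d) (snd d))"
          using CF by (simp add: good2_def)
        have c2: "comp (Dg2 i1 i2 (b1 - fst d) (b2 - snd d)) G = smul (CG (b1 - fst d, b2 - snd d)) (X2 q i1 i2 (b1 - fst d) (b2 - snd d))"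
          using CG[rule_format, of "(b1 - fst d, b2 - snd d)"] by (simp add: good2_def)
        show "shprod q (comp (Dg2 i1 i2 (fst d) (snd d)) F) (comp (Dg2 i1 i2 (b1 - fst d) (b2 - snd d)) G) w
            = smul (CF d * CG (b1 - fst d, b2 - snd d) * ?e d) ?X w"
        proof -
          have s1: "fst d + (b1 - fst d) = b1" "snd d + (b2 - snd d) = b2" using d by auto
          show ?thesis by (simp add: c1 c2 shprod_smul_left shprod_smul_right XX[OF yx] smul_smul mult_ac s1)
        qed
      qed
      also have "\<dots> = smul (\<Sum>d\<in>?I. CF d * CG (b1 - fst d, b2 - snd d) * ?e d) ?X w"
        by (rule sum_smul)
      finally show "comp ?D (shprod q F G) w = smul (\<Sum>d\<in>?I. CF d * CG (b1 - fst d, b2 - snd d) * ?e d) ?X w" .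
    qed
    let ?\<alpha> = "\<Sum>d\<in>?I. Cf d * Cg (b1 - fst d, b2 - snd d) * ?e d"
    let ?\<beta> = "\<Sum>d\<in>?I. Cg d * Cf (b1 - fst d, b2 - snd d) * ?e d"
    have cb: "comp ?D (br q f g) = smul (?\<alpha> - ?\<beta>) ?X"
      unfolding comp_br prod_comp[OF Cf Cg] prod_comp[OF Cg Cf] by (simp add: smul_def fun_eq_iff algebra_simps)
    have "?\<alpha> = ?\<beta>" if bad: "t^b1 = 1" "t^b2 = 1"
    proof -
      have "?\<beta> = (\<Sum>d\<in>?I. Cg (b1 - fst d, b2 - snd d) * Cf d * t^((b2 - snd d) * fst d))"
        by (rule sum.reindex_bij_witness[of _ "\<lambda>d. (b1 - fst d, b2 - snd d)" "\<lambda>d. (b1 - fst d, b2 - snd d)"])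
           (auto simp: mult.commute)
      also have "\<dots> = ?\<alpha>"
        by (rule sum.cong[OF refl]) (auto simp: pow_ident[OF t0 bad] mult_ac)
      finally show ?thesis by simp
    qed
    then show "\<exists>c. good2 q i1 i2 t (br q f g) b1 b2 c"
      by (intro exI[of _ "?\<alpha> - ?\<beta>"]) (simp add: good2_def cb)
  qed
qed

lemma part_iv_2d:
  fixes q :: "nat \<Rightarrow> nat \<Rightarrow> 'a::field"
  assumes ne: "i1 \<noteq> i2" and t0: "t \<noteq> 0"
    and yx: "shprod q (gen i2) (gen i1) = smul t (shprod q (gen i1) (gen i2))"
    and PL: "X2 q i1 i2 a1 a2 \<in> lie_minus q n" and P0: "X2 q i1 i2 a1 a2 \<noteq> (\<lambda>w. 0)"
    and a: "1 \<le> a1" "1 \<le> a2" and t1: "t^a1 = 1" "t^a2 = 1"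
  shows False
proof -
  obtain c where "good2 q i1 i2 t (X2 q i1 i2 a1 a2) a1 a2 c" using inv2[OF ne t0 yx PL] by blast
  then have "comp (Dg2 i1 i2 a1 a2) (X2 q i1 i2 a1 a2) = smul 0 (X2 q i1 i2 a1 a2)"
    using a t1 by (simp add: good2_def)
  moreover have "supp_in (X2 q i1 i2 a1 a2) (Dg2 i1 i2 a1 a2)"
    unfolding X2_def Dg2_def
    using supp_in_shprod[OF supp_in_pow[OF supp_in_gen] supp_in_pow[OF supp_in_gen]]
    by (simp add: repeat_mset_replicate_mset)
  ultimately show False using P0 comp_supp by (fastforce simp: smul_def)
qed



definition good1 where
  "good1 q i f N (c::'a::field) = (comp (replicate_mset N i) f = smul c (shpow q (gen i) N) \<and> (N \<noteq> 1 \<longrightarrow> c = 0))"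

lemma uniq1:
  assumes M: "M1 + M2 = replicate_mset N i"
  shows "\<exists>!d. d \<in> {0..N} \<and> M1 = replicate_mset d i \<and> M2 = replicate_mset (N - d) i"
proof -
  have cnt: "count M1 j + count M2 j = (if j = i then N else 0)" for j
    using arg_cong[OF M, of "\<lambda>M. count M j"] by simp
  have e1c: "count M1 j = count (replicate_mset (count M1 i) i) j" for j
    using cnt[of j] by (cases "j = i") auto
  have e1: "M1 = replicate_mset (count M1 i) i"
    unfolding multiset_eq_iff using e1c by blast
  have e2c: "count M2 j = count (replicate_mset (N - count M1 i) i) j" for j
    using cnt[of j] cnt[of i] by (cases "j = i") auto
  have e2: "M2 = replicate_mset (N - count M1 i) i"
    unfolding multiset_eq_iff using e2c by blast
  have r: "count M1 i \<in> {0..N}" using cnt[of i] by auto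
  show ?thesis
  proof (rule ex1I[of _ "count M1 i"])
    show "count M1 i \<in> {0..N} \<and> M1 = replicate_mset (count M1 i) i \<and> M2 = replicate_mset (N - count M1 i) i"
      using r e1 e2 by blast
  next
    fix d assume "d \<in> {0..N} \<and> M1 = replicate_mset d i \<and> M2 = replicate_mset (N - d) i"
    then have "M1 = replicate_mset d i" by blast
    then show "d = count M1 i" by simp
  qed
qed

lemma inv1:
  fixes q :: "nat \<Rightarrow> nat \<Rightarrow> 'a::field"
  shows "f \<in> lie_minus q n \<Longrightarrow> \<forall>N. \<exists>c. good1 q i f N c"
proof (induction f rule: lie_minus.induct)
  case (gen j)
  show ?case
  proof (intro allI)
    fix N :: nat
    show "\<exists>c. good1 q i (gen j) N c"
    proof (cases "replicate_mset N i = {#j#}")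
      case True
      then have "size (replicate_mset N i) = 1" by simp
      then have N: "N = 1" by simp
      then have "j = i" using True by simp
      then show ?thesis using N True by (intro exI[of _ 1]) (simp add: good1_def comp_gen unit_right smul_one)
    next
      case False
      then show ?thesis by (intro exI[of _ 0]) (simp add: good1_def comp_gen smul_def)
    qed
  qed
next
  case (add f g)
  show ?case
  proof (intro allI)
    fix N :: nat
    obtain c1 c2 where "good1 q i f N c1" "good1 q i g N c2" using add.IH by blast
    then show "\<exists>c. good1 q i (\<lambda>w. f w + g w) N c"
      by (intro exI[of _ "c1 + c2"]) (auto simp: good1_def comp_add smul_def algebra_simps)
  qed
next
  case (smul f c')
  show ?case
  proof (intro allI)
    fix N :: nat
    obtain c1 where "good1 q i f N c1" using smul.IH by blast
    then show "\<exists>c. good1 q i (smul c' f) N c"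
      by (intro exI[of _ "c' * c1"]) (auto simp: good1_def comp_smul smul_smul)
  qed
next
  case (bracket f g)
  obtain Cf where Cf: "\<forall>N. good1 q i f N (Cf N)"
    using choice[of "\<lambda>N c. good1 q i f N c"] bracket.IH by blast
  obtain Cg where Cg: "\<forall>N. good1 q i g N (Cg N)"
    using choice[of "\<lambda>N c. good1 q i g N c"] bracket.IH by blast
  show ?case
  proof (intro allI)
    fix N :: nat
    let ?I = "{0..N}"
    let ?X = "shpow q (gen i) N :: nat list \<Rightarrow> 'a"
    let ?D = "replicate_mset N i"
    have fI: "finite ?I" by simp
    have sD: "\<forall>d\<in>?I. replicate_mset d i + replicate_mset (N - d) i = ?D"
      by (auto simp: multiset_eq_iff)
    have un: "\<forall>M1 M2. M1 + M2 = ?D \<longrightarrow> (\<exists>!d. d \<in> ?I \<and> M1 = replicate_mset d i \<and> M2 = replicate_mset (N - d) i)"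
    proof (intro allI impI)
      fix M1 M2 :: "nat multiset" assume "M1 + M2 = ?D"
      then show "\<exists>!d. d \<in> ?I \<and> M1 = replicate_mset d i \<and> M2 = replicate_mset (N - d) i" by (rule uniq1)
    qed
    have prod_comp: "comp ?D (shprod q F G) = smul (\<Sum>d\<in>?I. CF d * CG (N - d)) ?X"
      if CF: "\<forall>N. good1 q i F N (CF N)" and CG: "\<forall>N. good1 q i G N (CG N)" for F G CF CG
    proof (rule ext)
      fix w
      have "comp ?D (shprod q F G) w = (\<Sum>d\<in>?I. shprod q (comp (replicate_mset d i) F) (comp (replicate_mset (N - d) i) G) w)"
        by (rule comp_decomp[OF fI sD un])
      also have "\<dots> = (\<Sum>d\<in>?I. smul (CF d * CG (N - d)) ?X w)"
      proof (rule sum.cong[OF refl])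
        fix d assume d: "d \<in> ?I"
        have c1: "comp (replicate_mset d i) F = smul (CF d) (shpow q (gen i) d)"
          using CF by (simp add: good1_def)
        have c2: "comp (replicate_mset (N - d) i) G = smul (CG (N - d)) (shpow q (gen i) (N - d))"
          using CG by (simp add: good1_def)
        have s1: "d + (N - d) = N" using d by auto
        show "shprod q (comp (replicate_mset d i) F) (comp (replicate_mset (N - d) i) G) w
            = smul (CF d * CG (N - d)) ?X w"
          by (simp add: c1 c2 shprod_smul_left shprod_smul_right shpow_add[symmetric] smul_smul mult_ac s1)
      qed
      also have "\<dots> = smul (\<Sum>d\<in>?I. CF d * CG (N - d)) ?X w"
        by (rule sum_smul)
      finally show "comp ?D (shprod q F G) w = smul (\<Sum>d\<in>?I. CF d * CG (N - d)) ?X w" .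
    qed
    let ?\<alpha> = "\<Sum>d\<in>?I. Cf d * Cg (N - d)"
    let ?\<beta> = "\<Sum>d\<in>?I. Cg d * Cf (N - d)"
    have cb: "comp ?D (br q f g) = smul (?\<alpha> - ?\<beta>) ?X"
      unfolding comp_br prod_comp[OF Cf Cg] prod_comp[OF Cg Cf] by (simp add: smul_def fun_eq_iff algebra_simps)
    have "?\<beta> = (\<Sum>d\<in>?I. Cg (N - d) * Cf d)"
      by (rule sum.reindex_bij_witness[of _ "\<lambda>d. N - d" "\<lambda>d. N - d"]) auto
    also have "\<dots> = ?\<alpha>" by (simp add: mult.commute)
    finally have "?\<alpha> = ?\<beta>" by simp
    then show "\<exists>c. good1 q i (br q f g) N c"
      by (intro exI[of _ 0]) (simp add: good1_def cb)
  qed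
qed

lemma part_iv_1d:
  fixes q :: "nat \<Rightarrow> nat \<Rightarrow> 'a::field"
  assumes PL: "shpow q (gen i) N \<in> lie_minus q n" and P0: "shpow q (gen i) N \<noteq> (\<lambda>w. 0)"
    and N: "N \<noteq> 1"
  shows False
proof -
  obtain c where "good1 q i (shpow q (gen i) N) N c" using inv1[OF PL] by blast
  then have "comp (replicate_mset N i) (shpow q (gen i) N) = smul 0 (shpow q (gen i) N)"
    using N by (simp add: good1_def)
  moreover have "supp_in (shpow q (gen i) N :: nat list \<Rightarrow> 'a) (replicate_mset N i)"
    using supp_in_pow[OF supp_in_gen[of i], where N=N and q=q] by (simp add: repeat_mset_replicate_mset)
  ultimately show False using P0 comp_supp by (fastforce simp: smul_def)
qed

lemma ss_one:
  fixes v1 v2 :: "nat list \<Rightarrow> 'a::field"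
  assumes c12: "shprod q v1 v2 = smul s12 (shprod q v2 v1)"
    and c21: "shprod q v2 v1 = smul s21 (shprod q v1 v2)"
    and a1: "1 \<le> a1" and a2: "1 \<le> a2"
    and P: "shprod q (shpow q v1 a1) (shpow q v2 a2) \<noteq> (\<lambda>w. 0)"
  shows "s12 * s21 = 1"
proof -
  have "shprod q v1 v2 \<noteq> (\<lambda>w. 0)" by (rule prod_nonzero[OF P a1 a2])
  then obtain w where w: "shprod q v1 v2 w \<noteq> 0" by auto
  have "shprod q v1 v2 w = s12 * s21 * shprod q v1 v2 w"
    by (subst c12, simp add: smul_def c21)
  with w show ?thesis by simp
qed

lemma part_iv:
  fixes q :: "nat \<Rightarrow> nat \<Rightarrow> 'a::field"
  assumes i: "i1 < n" "i2 < n" and s12: "s12 \<noteq> 0" and s21: "s21 \<noteq> 0"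
    and same: "i1 = i2 \<longrightarrow> s12 = 1 \<and> s21 = 1"
    and c12: "shprod q (gen i1) (gen i2) = smul s12 (shprod q (gen i2) (gen i1))"
    and c21: "shprod q (gen i2) (gen i1) = smul s21 (shprod q (gen i1) (gen i2))"
    and a1: "1 \<le> a1" and a2: "1 \<le> a2"
    and P: "shprod q (shpow q (gen i1) a1) (shpow q (gen i2) a2) \<noteq> (\<lambda>w. 0)"
  shows "shprod q (shpow q (gen i1) a1) (shpow q (gen i2) a2) \<in> lie_minus q n
           \<longleftrightarrow> (\<not> ord_dvd s21 a1 \<or> \<not> ord_dvd s12 a2)"
proof
  assume "\<not> ord_dvd s21 a1 \<or> \<not> ord_dvd s12 a2"
  then show "shprod q (shpow q (gen i1) a1) (shpow q (gen i2) a2) \<in> lie_minus q n"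
    by (rule part_iii[OF lie_minus.gen[OF i(1)] lie_minus.gen[OF i(2)] s12 s21 c12 c21 a1 a2 P])
next
  assume PL: "shprod q (shpow q (gen i1) a1) (shpow q (gen i2) a2) \<in> lie_minus q n"
  show "\<not> ord_dvd s21 a1 \<or> \<not> ord_dvd s12 a2"
  proof (rule ccontr)
    assume "\<not> (\<not> ord_dvd s21 a1 \<or> \<not> ord_dvd s12 a2)"
    then have o1: "s21^a1 = 1" and o2: "s12^a2 = 1"
      using ord_dvd_iff[OF a1, of s21] ord_dvd_iff[OF a2, of s12] by blast+
    have ss: "s12 * s21 = 1" by (rule ss_one[OF c12 c21 a1 a2 P])
    show False
    proof (cases "i1 = i2")
      case True
      have e: "shprod q (shpow q (gen i1) a1) (shpow q (gen i2) a2) = shpow q (gen i1) (a1 + a2)"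
        using True by (simp add: shpow_add)
      have N: "a1 + a2 \<noteq> 1" using a1 a2 by simp
      have PL': "shpow q (gen i1) (a1 + a2) \<in> lie_minus q n" using PL unfolding e .
      have P': "shpow q (gen i1) (a1 + a2) \<noteq> (\<lambda>w. 0)" using P unfolding e .
      show False by (rule part_iv_1d[OF PL' P' N])
    next
      case False
      have t2: "s21^a2 = 1"
      proof -
        have "(s12 * s21)^a2 = 1" using ss by simp
        then show ?thesis using o2 by (simp add: power_mult_distrib)
      qed
      show False
        by (rule part_iv_2d[OF False s21 c21 _ _ a1 a2 o1 t2]) (use PL P in \<open>simp_all add: X2_def\<close>)
    qed
  qed
qed


theorem lemma6p6:
  fixes q :: "nat \<Rightarrow> nat \<Rightarrow> 'a::field_char_0" and n :: nat
  assumes "alg_closed TYPE('a)"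
    and "\<forall>i<n. \<forall>j<n. q i j \<noteq> 0"
  shows
  "(\<forall>(k::nat) (u::nat \<Rightarrow> nat list \<Rightarrow> 'a) (r::nat \<Rightarrow> nat \<Rightarrow> 'a).
      2 \<le> k
      \<and> (\<forall>i\<in>{1..k}. u i \<in> nichols q n \<and> homogeneous (u i))
      \<and> (\<forall>i\<in>{1..k}. \<forall>j\<in>{1..k}. r i j \<noteq> 0
            \<and> shprod q (u i) (u j) = smul (r i j) (shprod q (u j) (u i))
            \<and> (u i = u j \<longrightarrow> r i j = 1))
      \<longrightarrow>
      (\<forall>m::nat \<Rightarrow> nat.
         foldl (\<lambda>a i. (br q (u i) ^^ m i) a) (u 1) [2..<Suc k]
         = smul (\<Prod>i=2..k. (r i 1 * (\<Prod>j=2..i-1. r i j ^ m j) - 1) ^ m i)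
                (foldl (\<lambda>a i. shprod q a (shpow q (u i) (m i))) (u 1) [2..<Suc k]))
      \<and> ((\<forall>i\<in>{1..k}. u i \<in> lie_minus q n) \<and> (\<forall>i\<in>{2..k}. (\<Prod>j=1..i-1. r i j) \<noteq> 1)
          \<longrightarrow> foldl (\<lambda>a i. shprod q a (u i)) (u 1) [2..<Suc k] \<in> lie_minus q n))
  \<and> (\<forall>(v1::nat list \<Rightarrow> 'a) v2 (s12::'a) s21 (a1::nat) a2.
      v1 \<in> lie_minus q n \<and> v2 \<in> lie_minus q n \<and> homogeneous v1 \<and> homogeneous v2
      \<and> s12 \<noteq> 0 \<and> s21 \<noteq> 0 \<and> (v1 = v2 \<longrightarrow> s12 = 1 \<and> s21 = 1)
      \<and> shprod q v1 v2 = smul s12 (shprod q v2 v1)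
      \<and> shprod q v2 v1 = smul s21 (shprod q v1 v2)
      \<and> 1 \<le> a1 \<and> 1 \<le> a2
      \<and> shprod q (shpow q v1 a1) (shpow q v2 a2) \<noteq> (\<lambda>w. 0)
      \<and> (\<not> ord_dvd s21 a1 \<or> \<not> ord_dvd s12 a2)
      \<longrightarrow> shprod q (shpow q v1 a1) (shpow q v2 a2) \<in> lie_minus q n)
  \<and> (\<forall>(i1::nat) i2 (s12::'a) s21 (a1::nat) a2.
      i1 < n \<and> i2 < n
      \<and> s12 \<noteq> 0 \<and> s21 \<noteq> 0 \<and> (i1 = i2 \<longrightarrow> s12 = 1 \<and> s21 = 1)
      \<and> shprod q (gen i1) (gen i2) = smul s12 (shprod q (gen i2) (gen i1))
      \<and> shprod q (gen i2) (gen i1) = smul s21 (shprod q (gen i1) (gen i2))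
      \<and> 1 \<le> a1 \<and> 1 \<le> a2
      \<and> shprod q (shpow q (gen i1) a1) (shpow q (gen i2) a2) \<noteq> (\<lambda>w. 0)
      \<longrightarrow> (shprod q (shpow q (gen i1) a1) (shpow q (gen i2) a2) \<in> lie_minus q n
           \<longleftrightarrow> (\<not> ord_dvd s21 a1 \<or> \<not> ord_dvd s12 a2)))"
  proof -
  have P1: "\<forall>(k::nat) (u::nat \<Rightarrow> nat list \<Rightarrow> 'a) (r::nat \<Rightarrow> nat \<Rightarrow> 'a).
      2 \<le> k
      \<and> (\<forall>i\<in>{1..k}. u i \<in> nichols q n \<and> homogeneous (u i))
      \<and> (\<forall>i\<in>{1..k}. \<forall>j\<in>{1..k}. r i j \<noteq> 0
            \<and> shprod q (u i) (u j) = smul (r i j) (shprod q (u j) (u i))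
            \<and> (u i = u j \<longrightarrow> r i j = 1))
      \<longrightarrow>
      (\<forall>m::nat \<Rightarrow> nat.
         foldl (\<lambda>a i. (br q (u i) ^^ m i) a) (u 1) [2..<Suc k]
         = smul (\<Prod>i=2..k. (r i 1 * (\<Prod>j=2..i-1. r i j ^ m j) - 1) ^ m i)
                (foldl (\<lambda>a i. shprod q a (shpow q (u i) (m i))) (u 1) [2..<Suc k]))
      \<and> ((\<forall>i\<in>{1..k}. u i \<in> lie_minus q n) \<and> (\<forall>i\<in>{2..k}. (\<Prod>j=1..i-1. r i j) \<noteq> 1)
          \<longrightarrow> foldl (\<lambda>a i. shprod q a (u i)) (u 1) [2..<Suc k] \<in> lie_minus q n)"
  proof (intro allI impI)
    fix k :: nat and u :: "nat \<Rightarrow> nat list \<Rightarrow> 'a" and r :: "nat \<Rightarrow> nat \<Rightarrow> 'a"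
    assume H: "2 \<le> k
      \<and> (\<forall>i\<in>{1..k}. u i \<in> nichols q n \<and> homogeneous (u i))
      \<and> (\<forall>i\<in>{1..k}. \<forall>j\<in>{1..k}. r i j \<noteq> 0
            \<and> shprod q (u i) (u j) = smul (r i j) (shprod q (u j) (u i))
            \<and> (u i = u j \<longrightarrow> r i j = 1))"
    have k: "2 \<le> k" using H by blast
    have comm: "\<forall>i\<in>{1..k}. \<forall>j\<in>{1..k}. shprod q (u i) (u j) = smul (r i j) (shprod q (u j) (u i))"
    proof (intro ballI)
      fix i j assume "i \<in> {1..k}" "j \<in> {1..k}"
      then show "shprod q (u i) (u j) = smul (r i j) (shprod q (u j) (u i))" using H by blast
    qed
    show "(\<forall>m::nat \<Rightarrow> nat.
         foldl (\<lambda>a i. (br q (u i) ^^ m i) a) (u 1) [2..<Suc k]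
         = smul (\<Prod>i=2..k. (r i 1 * (\<Prod>j=2..i-1. r i j ^ m j) - 1) ^ m i)
                (foldl (\<lambda>a i. shprod q a (shpow q (u i) (m i))) (u 1) [2..<Suc k]))
      \<and> ((\<forall>i\<in>{1..k}. u i \<in> lie_minus q n) \<and> (\<forall>i\<in>{2..k}. (\<Prod>j=1..i-1. r i j) \<noteq> 1)
          \<longrightarrow> foldl (\<lambda>a i. shprod q a (u i)) (u 1) [2..<Suc k] \<in> lie_minus q n)"
    proof (intro conjI allI impI)
      fix m :: "nat \<Rightarrow> nat"
      have "Af q u m k = smul (\<Prod>i=2..k. (r i 1 * (\<Prod>j=2..i-1. r i j ^ m j) - 1) ^ m i) (Bf q u m k)"
        by (rule part_i[OF comm]) (use k in auto)
      then show "foldl (\<lambda>a i. (br q (u i) ^^ m i) a) (u 1) [2..<Suc k]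
         = smul (\<Prod>i=2..k. (r i 1 * (\<Prod>j=2..i-1. r i j ^ m j) - 1) ^ m i)
                (foldl (\<lambda>a i. shprod q a (shpow q (u i) (m i))) (u 1) [2..<Suc k])"
        unfolding Af_def Bf_def .
    next
      assume "(\<forall>i\<in>{1..k}. u i \<in> lie_minus q n) \<and> (\<forall>i\<in>{2..k}. (\<Prod>j=1..i-1. r i j) \<noteq> 1)"
      then show "foldl (\<lambda>a i. shprod q a (u i)) (u 1) [2..<Suc k] \<in> lie_minus q n"
        using part_ii[OF comm k] by blast
    qed
  qed
  have P2: "\<forall>(v1::nat list \<Rightarrow> 'a) v2 (s12::'a) s21 (a1::nat) a2.
      v1 \<in> lie_minus q n \<and> v2 \<in> lie_minus q n \<and> homogeneous v1 \<and> homogeneous v2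
      \<and> s12 \<noteq> 0 \<and> s21 \<noteq> 0 \<and> (v1 = v2 \<longrightarrow> s12 = 1 \<and> s21 = 1)
      \<and> shprod q v1 v2 = smul s12 (shprod q v2 v1)
      \<and> shprod q v2 v1 = smul s21 (shprod q v1 v2)
      \<and> 1 \<le> a1 \<and> 1 \<le> a2
      \<and> shprod q (shpow q v1 a1) (shpow q v2 a2) \<noteq> (\<lambda>w. 0)
      \<and> (\<not> ord_dvd s21 a1 \<or> \<not> ord_dvd s12 a2)
      \<longrightarrow> shprod q (shpow q v1 a1) (shpow q v2 a2) \<in> lie_minus q n"
  proof (intro allI impI)
    fix v1 v2 :: "nat list \<Rightarrow> 'a" and s12 s21 :: 'a and a1 a2 :: nat
    assume H: "v1 \<in> lie_minus q n \<and> v2 \<in> lie_minus q n \<and> homogeneous v1 \<and> homogeneous v2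
      \<and> s12 \<noteq> 0 \<and> s21 \<noteq> 0 \<and> (v1 = v2 \<longrightarrow> s12 = 1 \<and> s21 = 1)
      \<and> shprod q v1 v2 = smul s12 (shprod q v2 v1)
      \<and> shprod q v2 v1 = smul s21 (shprod q v1 v2)
      \<and> 1 \<le> a1 \<and> 1 \<le> a2
      \<and> shprod q (shpow q v1 a1) (shpow q v2 a2) \<noteq> (\<lambda>w. 0)
      \<and> (\<not> ord_dvd s21 a1 \<or> \<not> ord_dvd s12 a2)"
    have h1: "v1 \<in> lie_minus q n" using H by blast
    have h2: "v2 \<in> lie_minus q n" using H by blast
    have h3: "s12 \<noteq> 0" using H by blast
    have h4: "s21 \<noteq> 0" using H by blast
    have h5: "shprod q v1 v2 = smul s12 (shprod q v2 v1)" using H by blast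
    have h6: "shprod q v2 v1 = smul s21 (shprod q v1 v2)" using H by blast
    have h7: "1 \<le> a1" using H by blast
    have h8: "1 \<le> a2" using H by blast
    have h9: "shprod q (shpow q v1 a1) (shpow q v2 a2) \<noteq> (\<lambda>w. 0)" using H by blast
    have h10: "\<not> ord_dvd s21 a1 \<or> \<not> ord_dvd s12 a2" using H by blast
    show "shprod q (shpow q v1 a1) (shpow q v2 a2) \<in> lie_minus q n"
      by (rule part_iii[OF h1 h2 h3 h4 h5 h6 h7 h8 h9 h10])
  qed
  have P3: "\<forall>(i1::nat) i2 (s12::'a) s21 (a1::nat) a2.
      i1 < n \<and> i2 < n
      \<and> s12 \<noteq> 0 \<and> s21 \<noteq> 0 \<and> (i1 = i2 \<longrightarrow> s12 = 1 \<and> s21 = 1)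
      \<and> shprod q (gen i1) (gen i2) = smul s12 (shprod q (gen i2) (gen i1))
      \<and> shprod q (gen i2) (gen i1) = smul s21 (shprod q (gen i1) (gen i2))
      \<and> 1 \<le> a1 \<and> 1 \<le> a2
      \<and> shprod q (shpow q (gen i1) a1) (shpow q (gen i2) a2) \<noteq> (\<lambda>w. 0)
      \<longrightarrow> (shprod q (shpow q (gen i1) a1) (shpow q (gen i2) a2) \<in> lie_minus q n
           \<longleftrightarrow> (\<not> ord_dvd s21 a1 \<or> \<not> ord_dvd s12 a2))"
  proof (intro allI impI)
    fix i1 i2 :: nat and s12 s21 :: 'a and a1 a2 :: nat
    assume H: "i1 < n \<and> i2 < n
      \<and> s12 \<noteq> 0 \<and> s21 \<noteq> 0 \<and> (i1 = i2 \<longrightarrow> s12 = 1 \<and> s21 = 1)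
      \<and> shprod q (gen i1) (gen i2) = smul s12 (shprod q (gen i2) (gen i1))
      \<and> shprod q (gen i2) (gen i1) = smul s21 (shprod q (gen i1) (gen i2))
      \<and> 1 \<le> a1 \<and> 1 \<le> a2
      \<and> shprod q (shpow q (gen i1) a1) (shpow q (gen i2) a2) \<noteq> (\<lambda>w. 0)"
    have h1: "i1 < n" using H by blast
    have h2: "i2 < n" using H by blast
    have h3: "s12 \<noteq> 0" using H by blast
    have h4: "s21 \<noteq> 0" using H by blast
    have h5: "i1 = i2 \<longrightarrow> s12 = 1 \<and> s21 = 1" using H by blast
    have h6: "shprod q (gen i1) (gen i2) = smul s12 (shprod q (gen i2) (gen i1))" using H by blast
    have h7: "shprod q (gen i2) (gen i1) = smul s21 (shprod q (gen i1) (gen i2))" using H by blast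
    have h8: "1 \<le> a1" using H by blast
    have h9: "1 \<le> a2" using H by blast
    have h10: "shprod q (shpow q (gen i1) a1) (shpow q (gen i2) a2) \<noteq> (\<lambda>w. 0)" using H by blast
    show "shprod q (shpow q (gen i1) a1) (shpow q (gen i2) a2) \<in> lie_minus q n
           \<longleftrightarrow> (\<not> ord_dvd s21 a1 \<or> \<not> ord_dvd s12 a2)"
      by (rule part_iv[OF h1 h2 h3 h4 h5 h6 h7 h8 h9 h10])
  qed
  show ?thesis using P1 P2 P3 by (intro conjI)
qed

end
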